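(* Let $q$ be a prime power and $n$ a positive integer. Let $g, h\in \mathbb{F}_q[x]$ with $g(x)$ a divisor of $x^n-1$, let $f\in\mathbb{F}_{q^n}[x]$, and let $P(x)=f(L_g(x))+L_h(x)$. Suppose that $L_g(f(L_g(y)))=0$ for every $y\in \mathbb{F}_{q^n}$. Then $P$ is a permutation polynomial of $\mathbb{F}_{q^n}$ if and only if $\gcd(x^n-1, h(x))=1$. Moreover, the hypothesis $L_g(f(L_g(y)))=0$ for all $y\in\mathbb{F}_{q^n}$ holds, for instance, whenever $f(x)=L_G(f_0(x))$ for some $f_0\in \mathbb{F}_{q^n}[x]$, where $G(x)=\frac{x^n-1}{g(x)}$.
   Context: For a polynomial $u(x)=\sum_{i=0}^m a_i x^i\in\mathbb{F}_q[x]$, its linearized $q$-associate is $L_u(x)=\sum_{i=0}^m a_i x^{q^i}$. A permutation polynomial of $\mathbb{F}_{q^n}$ is a polynomial inducing a bijection of $\mathbb{F}_{q^n}$. *)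

theory Defs
  imports "HOL-Computational_Algebra.Computational_Algebra"
begin

definition linq :: "nat \<Rightarrow> 'a::comm_ring_1 poly \<Rightarrow> 'a \<Rightarrow> 'a" where
  "linq q u x = (\<Sum>i\<le>degree u. coeff u i * x ^ (q ^ i))"

text \<open>Polynomial with all coefficients in the subfield F_q = {x. x^q = x}.\<close>
definition over_Fq :: "nat \<Rightarrow> 'a::comm_ring_1 poly \<Rightarrow> bool" where
  "over_Fq q u \<longleftrightarrow> (\<forall>i. coeff u i ^ q = coeff u i)"

definition prime_power :: "nat \<Rightarrow> bool" where
  "prime_power q \<longleftrightarrow> (\<exists>p k. prime p \<and> k > 0 \<and> q = p ^ k)"

definition is_perm_poly :: "('a \<Rightarrow> 'a) \<Rightarrow> bool" where
  "is_perm_poly P \<longleftrightarrow> bij P"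

end

theory Submission imports Defs begin

lemma linq_alt:
  assumes "degree u < N"
  shows "linq q u x = (\<Sum>i<N. coeff u i * x ^ (q ^ i))"
  unfolding linq_def
  by (rule sum.mono_neutral_left) (use assms in \<open>auto simp: coeff_eq_0\<close>)

lemma linq_add: "linq q (u + v) x = linq q u x + linq q v x"
proof -
  define N where "N = Suc (max (degree u) (degree v))"
  have "degree (u + v) < N" unfolding N_def using degree_add_le_max[of u v] by simp
  moreover have "degree u < N" "degree v < N" unfolding N_def by auto
  ultimately show ?thesis by (simp add: linq_alt[of _ N] sum.distrib distrib_right)
qed

lemma linq_smult: "linq q (smult a u) x = a * linq q u x"
proof -
  have "degree (smult a u) < Suc (degree u)" using degree_smult_le[of a u] by simp
  then show ?thesis by (simp add: linq_alt[of _ "Suc (degree u)"] sum_distrib_left mult.assoc distrib_left)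
qed

lemma linq_diff: "linq q (u - v) x = linq q u x - linq q v x"
  using linq_add[of q "u - v" v x] by (simp add: algebra_simps)

lemma linq_0 [simp]: "linq q 0 x = 0"
  by (simp add: linq_def)

lemma linq_1: "linq q 1 x = x"
  by (simp add: linq_def)

lemma linq_monom: "linq q (monom c n) x = c * x ^ (q ^ n)"
proof -
  have "degree (monom c n) < Suc n" using degree_monom_le[of c n] by simp
  then have "linq q (monom c n) x = (\<Sum>i<Suc n. coeff (monom c n) i * x ^ (q ^ i))"
    by (rule linq_alt)
  also have "\<dots> = c * x ^ (q ^ n)"
    by (simp add: coeff_monom if_distrib sum.delta')
  finally show ?thesis .
qed

lemma linq_pCons: "linq q (pCons a u) x = a * x + linq q u (x ^ q)"
proof -
  have "degree (pCons a u) < Suc (Suc (degree u))" using degree_pCons_le[of a u] by simp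
  then have "linq q (pCons a u) x = (\<Sum>i<Suc (Suc (degree u)). coeff (pCons a u) i * x ^ (q ^ i))"
    by (rule linq_alt)
  also have "\<dots> = a * x + (\<Sum>i<Suc (degree u). coeff u i * x ^ (q ^ Suc i))"
    by (subst sum.lessThan_Suc_shift) simp
  also have "(\<Sum>i<Suc (degree u). coeff u i * x ^ (q ^ Suc i)) = linq q u (x ^ q)"
    by (simp add: linq_alt[of u "Suc (degree u)"] power_mult mult.commute)
  finally show ?thesis .
qed

lemma linq_at0: "q > 0 \<Longrightarrow> linq q u 0 = 0"
  by (simp add: linq_def power_0_left)

locale frobq =
  fixes q :: nat and dummy :: "'a::field itself"
  assumes q_pos: "q > 0"
  assumes fr: "\<And>x y :: 'a. (x + y) ^ q = x ^ q + y ^ q"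
begin

lemma fr_pow: "((x :: 'a) + y) ^ (q ^ i) = x ^ (q ^ i) + y ^ (q ^ i)"
proof (induction i arbitrary: x y)
  case (Suc i)
  have "(x + y) ^ (q ^ Suc i) = ((x + y) ^ q) ^ (q ^ i)"
    by (simp add: power_mult mult.commute)
  also have "\<dots> = (x ^ q) ^ (q ^ i) + (y ^ q) ^ (q ^ i)" by (simp add: fr Suc)
  finally show ?case by (simp add: power_mult mult.commute)
qed simp

lemma fr_sum: "(sum (f :: _ \<Rightarrow> 'a) A) ^ q = (\<Sum>i\<in>A. f i ^ q)"
  by (induction A rule: infinite_finite_induct) (use q_pos in \<open>auto simp: fr\<close>)

lemma fr_neg1: "(-1 :: 'a) ^ q = -1"
proof -
  have "(1 + (-1::'a)) ^ q = 1 + (-1) ^ q" by (simp only: fr) simp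
  then have "0 = 1 + (-1::'a) ^ q" using q_pos by (simp add: power_0_left)
  then show ?thesis by (simp add: eq_neg_iff_add_eq_0 add.commute)
qed

lemma linq_add_arg: "linq q u ((x::'a) + y) = linq q u x + linq q u y"
  by (simp add: linq_def fr_pow distrib_left sum.distrib)

lemma linq_diff_arg: "linq q u ((x::'a) - y) = linq q u x - linq q u y"
  using linq_add_arg[of u "x - y" y] by (simp add: algebra_simps)

lemma linq_frob:
  assumes "over_Fq q u"
  shows "linq q u ((x::'a) ^ q) = (linq q u x) ^ q"
proof -
  have "(linq q u x) ^ q = (\<Sum>i\<le>degree u. (coeff u i * x ^ q ^ i) ^ q)"
    unfolding linq_def by (rule fr_sum)
  also have "\<dots> = linq q u (x ^ q)"
    unfolding linq_def
    using assms by (simp add: over_Fq_def power_mult_distrib flip: power_mult) (simp add: mult.commute)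
  finally show ?thesis by simp
qed

lemma linq_mult:
  assumes "over_Fq q v"
  shows "linq q (u * v) (x::'a) = linq q u (linq q v x)"
proof (induction u arbitrary: x rule: pCons_induct)
  case (pCons a u)
  have "linq q (pCons a u * v) x = a * linq q v x + linq q (u * v) (x ^ q)"
    by (simp add: mult_pCons_left linq_add linq_smult linq_pCons)
  also have "\<dots> = a * linq q v x + linq q u ((linq q v x) ^ q)"
    by (simp add: pCons linq_frob assms)
  also have "\<dots> = linq q (pCons a u) (linq q v x)"
    by (simp add: linq_pCons)
  finally show ?case .
qed simp

definition phi :: "'a poly \<Rightarrow> 'a poly" where
  "phi p = map_poly (\<lambda>c. c ^ q) p"

lemma coeff_phi: "coeff (phi p) n = (coeff p n) ^ q"
  unfolding phi_def using q_pos by (simp add: coeff_map_poly power_0_left)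

lemma degree_phi: "degree (phi p) = degree p"
  unfolding phi_def by (rule degree_map_poly) simp

lemma phi_mult: "phi (u * v) = phi u * phi v"
  by (rule poly_eqI) (simp add: coeff_phi coeff_mult fr_sum power_mult_distrib)

lemma over_Fq_phi: "over_Fq q u \<longleftrightarrow> phi u = u"
  by (simp add: over_Fq_def poly_eq_iff coeff_phi)

lemma over_Fq_div:
  fixes g a :: "'a poly"
  assumes "over_Fq q g" "over_Fq q a" "g \<noteq> 0" "g dvd a"
  shows "over_Fq q (a div g)"
proof -
  define G where "G = a div g"
  have a: "a = g * G" using assms(4) by (simp add: G_def)
  have "g * phi G = g * G"
    using phi_mult[of g G] assms(1,2) a by (simp add: over_Fq_phi)
  then have "phi G = G" using assms(3) by simp
  then show ?thesis by (simp add: over_Fq_phi G_def)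
qed

end

lemma lead_coeff_normalize1: "(p::'a::field_gcd poly) \<noteq> 0 \<Longrightarrow> lead_coeff (normalize p) = 1"
proof -
  assume p: "p \<noteq> 0"
  have u: "unit_factor (lead_coeff p) = lead_coeff p"
    using p by (simp add: dvd_field_iff is_unit_unit_factor)
  have "degree (normalize p) = degree p"
    unfolding normalize_poly_eq_map_poly using p by (intro degree_map_poly) (simp add: u)
  then show ?thesis using p by (simp add: u)
qed

lemma over_Fq_gcd:
  fixes a b :: "'a::field_gcd poly"
  assumes fq: "frobq TYPE('a) q" and "over_Fq q a" "over_Fq q b" "a \<noteq> 0"
  shows "over_Fq q (gcd a b)"
proof -
  interpret frobq q "TYPE('a)" by (rule fq)
  define d where "d = gcd a b"
  have dnz: "d \<noteq> 0" using assms(4) by (simp add: d_def)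
  have ld: "lead_coeff d = 1"
    using lead_coeff_normalize1[OF dnz] by (simp add: d_def)
  have "phi d dvd a"
  proof -
    obtain k where "a = d * k" using gcd_dvd1[of a b] unfolding d_def dvd_def by blast
    then have "phi a = phi d * phi k" by (simp add: phi_mult)
    then show ?thesis using assms(2) by (metis over_Fq_phi dvd_triv_left)
  qed
  moreover have "phi d dvd b"
  proof -
    obtain k where "b = d * k" using gcd_dvd2[of a b] unfolding d_def dvd_def by blast
    then have "phi b = phi d * phi k" by (simp add: phi_mult)
    then show ?thesis using assms(3) by (metis over_Fq_phi dvd_triv_left)
  qed
  ultimately have "phi d dvd d" by (simp add: d_def)
  then obtain k where k: "d = phi d * k" unfolding dvd_def by blast
  have pnz: "phi d \<noteq> 0" using dnz k by (metis mult_zero_left)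
  have knz: "k \<noteq> 0" using k dnz by (metis mult_zero_right)
  have "degree d = degree (phi d) + degree k" using k pnz knz by (metis degree_mult_eq)
  then have "degree k = 0" by (simp add: degree_phi)
  then obtain c where c: "k = [:c:]" by (elim degree_eq_zeroE)
  have "lead_coeff (phi d) = 1" using ld q_pos by (simp add: coeff_phi degree_phi)
  moreover have "lead_coeff d = lead_coeff (phi d) * lead_coeff k" using k by (metis lead_coeff_mult)
  ultimately have "lead_coeff d = c" using c by simp
  then have "k = 1" using ld c by simp
  then have "phi d = d" using k by (metis mult.right_neutral)
  then show ?thesis by (simp add: over_Fq_phi d_def)
qed

lemma linq_poly:
  fixes u :: "'a::field poly"
  assumes "u \<noteq> 0" "q \<ge> 2"
  shows "\<exists>p. p \<noteq> 0 \<and> degree p \<le> q ^ degree u \<and> (\<forall>x. linq q u x = poly p x)"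
proof (intro exI conjI allI)
  define p where "p = (\<Sum>i\<le>degree u. monom (coeff u i) (q ^ i))"
  show "linq q u x = poly p x" for x
    by (simp add: p_def linq_def poly_sum poly_monom)
  show "degree p \<le> q ^ degree u"
    unfolding p_def
    by (rule degree_sum_le) (use assms in \<open>auto intro: order.trans[OF degree_monom_le] power_increasing\<close>)
  have "coeff p (q ^ degree u) = (\<Sum>i\<le>degree u. if i = degree u then coeff u i else 0)"
    unfolding p_def coeff_sum coeff_monom
    by (intro sum.cong refl) (use assms in \<open>auto simp: power_inject_exp\<close>)
  also have "\<dots> = lead_coeff u" by simp
  finally show "p \<noteq> 0" using assms by auto
qed

lemma linq_roots_card:
  fixes u :: "'a::field poly"
  assumes "u \<noteq> 0" "q \<ge> 2"
  shows "card {x. linq q u x = 0} \<le> q ^ degree u"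
proof -
  obtain p where p: "p \<noteq> 0" "degree p \<le> q ^ degree u" "\<forall>x. linq q u x = poly p x"
    using linq_poly[OF assms] by blast
  have "card {x. linq q u x = 0} = card {x. poly p x = 0}" using p(3) by simp
  also have "\<dots> \<le> degree p" by (rule card_poly_roots_bound[OF p(1)])
  finally show ?thesis using p(2) by simp
qed


lemma field_pow_card:
  fixes x :: "'a::{field,finite}"
  shows "x ^ card (UNIV :: 'a set) = x"
proof (cases "x = 0")
  case False
  have "x * (\<Prod>y\<in>UNIV-{0}. x * y) = x * x ^ (card (UNIV :: 'a set) - 1) * \<Prod>(UNIV-{0})"
    by (simp add: prod.distrib mult_ac)
  also have "x * x ^ (card (UNIV :: 'a set) - 1) = x ^ Suc (card (UNIV :: 'a set) - 1)"
    by (subst power_Suc) auto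
  also have "Suc (card (UNIV :: 'a set) - 1) = card (UNIV :: 'a set)"
    using finite_UNIV_card_ge_0[where ?'a = 'a] by simp
  also have "(\<Prod>y\<in>UNIV-{0}. x * y) = (\<Prod>y\<in>UNIV-{0}. y)"
    by (rule prod.reindex_bij_witness[of _ "\<lambda>y. y / x" "\<lambda>y. x * y"]) (use False in auto)
  finally show ?thesis
    by simp
qed (use finite_UNIV_card_ge_0[where ?'a = 'a] in auto)

lemma of_nat_card_0: "of_nat (card (UNIV :: 'a::{ring_1,finite} set)) = (0::'a)"
proof -
  have "(\<Sum>x\<in>UNIV. x + 1) = (\<Sum>x\<in>(UNIV::'a set). x)"
    by (rule sum.reindex_bij_witness[of _ "\<lambda>y. y - 1" "\<lambda>y. y + 1"]) auto
  then show ?thesis by (simp add: sum.distrib)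
qed

lemma setup_frob:
  assumes "prime_power q" "card (UNIV :: 'a::{field,finite} set) = q ^ n"
  shows "frobq TYPE('a) q" "q \<ge> 2"
proof -
  obtain p0 k0 where pk: "prime p0" "k0 > 0" "q = p0 ^ k0"
    using assms(1) unfolding prime_power_def by blast
  have cp: "CHAR('a) > 0" by (rule finite_imp_CHAR_pos) simp
  have pc: "prime CHAR('a)" using prime_CHAR_semidom[OF cp] .
  have "CHAR('a) dvd card (UNIV :: 'a set)"
    using of_nat_card_0[where 'a='a] by (simp add: of_nat_eq_0_iff_char_dvd)
  then have "CHAR('a) dvd p0 ^ (k0 * n)" using assms(2) pk by (simp add: power_mult)
  then have "CHAR('a) dvd p0" using prime_dvd_power[OF pc] by blast
  then have cp0: "CHAR('a) = p0" using pc pk by (simp add: primes_dvd_imp_eq)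
  show "q \<ge> 2"
  proof -
    have "p0 \<ge> 2" using pk by (simp add: prime_ge_2_nat)
    moreover have "p0 \<le> p0 ^ k0" by (intro self_le_power) (use pk prime_ge_1_nat in auto)
    ultimately show ?thesis using pk by simp
  qed
  then show "frobq TYPE('a) q"
    unfolding frobq_def using freshmans_dream'[OF pc, of q k0] pk cp0 cp by auto
qed

theorem proposition2p6:
  fixes q n :: nat and g h :: "'a::{field_gcd,finite} poly"
  assumes "prime_power q" and "n > 0" and "card (UNIV :: 'a set) = q ^ n"
    and "over_Fq q g" and "over_Fq q h"
    and "g dvd (monom 1 n - 1)"
  shows "(\<forall>f :: 'a poly. (\<forall>y. linq q g (poly f (linq q g y)) = 0) \<longrightarrow>
            (is_perm_poly (\<lambda>x. poly f (linq q g x) + linq q h x)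
               \<longleftrightarrow> gcd (monom 1 n - 1) h = 1))
       \<and> (\<forall>(f0 :: 'a poly) y. linq q g (linq q ((monom 1 n - 1) div g) (poly f0 (linq q g y))) = 0)"
proof -
  note fq = setup_frob[OF assms(1,3)]
  interpret frobq q "TYPE('a)" by (rule fq(1))
  have q2: "q \<ge> 2" by (rule fq(2))
  define U :: "'a poly" where "U = monom 1 n - 1"
  have degU: "degree U = n"
  proof -
    have "U = monom 1 n + (-1)" by (simp add: U_def)
    also have "degree \<dots> = degree (monom (1::'a) n)"
      by (rule degree_add_eq_left) (use assms(2) in \<open>simp add: degree_monom_eq\<close>)
    finally show ?thesis by (simp add: degree_monom_eq)
  qed
  have Unz: "U \<noteq> 0" using degU assms(2) by auto
  have FqU: "over_Fq q U"
    unfolding over_Fq_def U_def using assms(2) q_pos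
    by (auto simp: coeff_monom fr_neg1 power_0_left)
  have LU: "linq q U x = 0" for x
  proof -
    have "linq q U x = x ^ (q ^ n) - x" by (simp add: U_def linq_diff linq_monom linq_1)
    also have "x ^ (q ^ n) = x" using field_pow_card[of x] assms(3) by simp
    finally show ?thesis by simp
  qed
  have L0: "linq q u 0 = 0" for u using q_pos by (rule linq_at0)
  have gnz: "g \<noteq> 0" using assms(6) Unz by (auto simp: U_def)
  have part2: "linq q g (linq q (U div g) w) = 0" for w
  proof -
    have FqG: "over_Fq q (U div g)"
      by (rule over_Fq_div[OF assms(4) FqU gnz]) (use assms(6) in \<open>simp add: U_def\<close>)
    have "linq q g (linq q (U div g) w) = linq q (g * (U div g)) w"
      by (simp add: linq_mult FqG)
    also have "g * (U div g) = U" using assms(6) by (simp add: U_def)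
    finally show ?thesis by (simp add: LU)
  qed
  have comm: "linq q g (linq q h x) = linq q h (linq q g x)" for x
    using linq_mult[OF assms(5), of g x] linq_mult[OF assms(4), of h x] by (simp add: mult.commute)
  have part1: "is_perm_poly (\<lambda>x. poly f (linq q g x) + linq q h x) \<longleftrightarrow> gcd U h = 1"
    if hf: "\<forall>y. linq q g (poly f (linq q g y)) = 0" for f
  proof -
    define P where "P = (\<lambda>x. poly f (linq q g x) + linq q h x)"
    have LgP: "linq q g (P x) = linq q h (linq q g x)" for x
      using hf by (simp add: P_def linq_add_arg comm)
    show ?thesis unfolding P_def[symmetric] is_perm_poly_def
    proof
      assume "gcd U h = 1"
      then obtain a b where ab: "a * U + b * h = 1"
        using bezout_coefficients_fst_snd[of U h] by metis
      have Lh_inj: "inj (linq q h)"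
      proof (rule injI)
        fix x y assume "linq q h x = linq q h y"
        have "z = linq q b (linq q h z)" for z
        proof -
          have "z = linq q (a * U + b * h) z" by (simp add: ab linq_1)
          also have "\<dots> = linq q a (linq q U z) + linq q b (linq q h z)"
            by (simp add: linq_add linq_mult FqU assms(5))
          finally show ?thesis by (simp add: LU L0)
        qed
        then show "x = y" using \<open>linq q h x = linq q h y\<close> by metis
      qed
      have "inj P"
      proof (rule injI)
        fix x y assume Pxy: "P x = P y"
        then have "linq q h (linq q g x) = linq q h (linq q g y)" by (metis LgP)
        then have gxy: "linq q g x = linq q g y" using Lh_inj by (simp add: inj_eq)
        then have "linq q h x = linq q h y" using Pxy by (simp add: P_def)
        then show "x = y" using Lh_inj by (simp add: inj_eq)
      qed
      then show "bij P" by (simp add: bij_def finite_UNIV_inj_surj)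
    next
      assume bP: "bij P"
      have Lh_inj: "inj (linq q h)"
      proof (rule ccontr)
        assume "\<not> inj (linq q h)"
        then obtain x y where "x \<noteq> y" "linq q h x = linq q h y" unfolding inj_def by blast
        then obtain z where z: "z \<noteq> 0" "linq q h z = 0"
          by (intro that[of "x - y"]) (auto simp: linq_diff_arg)
        define S where "S = {w. linq q h w = 0}"
        show False
        proof (cases "inj_on (linq q g) S")
          case False
          then obtain x y where "x \<in> S" "y \<in> S" "x \<noteq> y" "linq q g x = linq q g y"
            unfolding inj_on_def by blast
          then have w: "x - y \<noteq> 0" "linq q h (x - y) = 0" "linq q g (x - y) = 0"
            by (auto simp: S_def linq_diff_arg)
          have "P (x - y) = P 0" using w by (simp add: P_def L0)
          then show False using w bP by (simp add: bij_def inj_eq)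
        next
          case True
          have "linq q g ` S \<subseteq> S" by (auto simp: S_def comm[symmetric] L0)
          then have "linq q g ` S = S" using True by (intro endo_inj_surj) auto
          then obtain w where zw: "z = linq q g w" using z by (auto simp: S_def)
          define Im where "Im = range (linq q g)"
          have "linq q h ` Im = Im"
          proof
            show "linq q h ` Im \<subseteq> Im" by (auto simp: Im_def comm[symmetric])
            show "Im \<subseteq> linq q h ` Im"
            proof
              fix u assume "u \<in> Im"
              then obtain v where v: "u = linq q g v" by (auto simp: Im_def)
              obtain x where "v = P x" using bP unfolding bij_def surj_def by blast
              then have "u = linq q h (linq q g x)" using v LgP by simp
              then show "u \<in> linq q h ` Im" by (auto simp: Im_def)
            qed
          qed
          then have "inj_on (linq q h) Im" by (simp add: inj_on_iff_eq_card)
          moreover have "z \<in> Im" "0 \<in> Im" using zw L0 by (auto simp: Im_def intro!: image_eqI[of _ _ 0])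
          moreover have "linq q h z = linq q h 0" using z L0 by simp
          ultimately have "z = 0" by (meson inj_onD)
          then show False using z by simp
        qed
      qed
      show "gcd U h = 1"
      proof (rule ccontr)
        assume dn1: "gcd U h \<noteq> 1"
        define d where "d = gcd U h"
        have dnz: "d \<noteq> 0" using Unz by (simp add: d_def)
        have Fqd: "over_Fq q d" unfolding d_def by (rule over_Fq_gcd[OF fq(1) FqU assms(5) Unz])
        have "degree d \<noteq> 0"
        proof
          assume "degree d = 0"
          then obtain c where "d = [:c:]" by (elim degree_eq_zeroE)
          moreover have "lead_coeff d = 1" using lead_coeff_normalize1[OF dnz] by (simp add: d_def)
          ultimately have "d = 1" by (simp add: one_pCons)
          then show False using dn1 by (simp add: d_def)
        qed
        obtain s where s: "U = d * s" unfolding d_def by (metis gcd_dvd1 dvdE)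
        obtain t where t: "h = d * t" unfolding d_def by (metis gcd_dvd2 dvdE)
        have snz: "s \<noteq> 0" using s Unz by auto
        have "degree U = degree d + degree s" using s dnz snz by (simp add: degree_mult_eq)
        then have degs: "degree s < n" using degU \<open>degree d \<noteq> 0\<close> by simp
        have "range (linq q d) \<subseteq> {y. linq q s y = 0}"
        proof
          fix y assume "y \<in> range (linq q d)"
          then obtain x where "y = linq q d x" by auto
          moreover have "linq q s (linq q d x) = linq q (s * d) x" by (simp add: linq_mult Fqd)
          moreover have "s * d = U" by (simp add: s mult.commute)
          ultimately show "y \<in> {y. linq q s y = 0}" using LU[of x] by simp
        qed
        then have "card (range (linq q d)) \<le> card {y. linq q s y = 0}"
          by (intro card_mono) auto
        also have "\<dots> \<le> q ^ degree s" by (rule linq_roots_card[OF snz q2])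
        also have "\<dots> < q ^ n" using degs q2 by (intro power_strict_increasing) auto
        finally have "card (range (linq q d)) < card (UNIV :: 'a set)" using assms(3) by simp
        then have "\<not> inj (linq q d)" using card_image[of "linq q d" UNIV] by auto
        then obtain x y where "x \<noteq> y" "linq q d x = linq q d y" unfolding inj_def by blast
        then have "x - y \<noteq> 0" "linq q d (x - y) = 0" by (auto simp: linq_diff_arg)
        moreover have "h = t * d" by (simp add: t mult.commute)
        ultimately have "linq q h (x - y) = linq q h 0" by (simp add: linq_mult Fqd L0)
        then show False using Lh_inj \<open>x - y \<noteq> 0\<close> by (simp add: inj_eq)
      qed
    qed
  qed
  show ?thesis
    using part1 part2 unfolding U_def by blast
qed

end
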